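(* Let $G=S_n$ and $H=S_b\wr S_a$ (the stabiliser of a partition of $\{1,\dots,n\}$ into $a$ blocks of size $b$), where $n=ab$, $a=b+1$ and $b\geqslant 3$. Then $b(G,H)=3$.
   Context: For a subgroup $H\leqslant G$, $H_G=\bigcap_{g\in G}H^g$ is the core of $H$, and $b(G,H)=\min\{|S| : S\subseteq G,\ \bigcap_{g\in S}H^g=H_G\}$. Equivalently here, $b(G,H)$ is the minimal number of partitions of $\{1,\dots,n\}$ into $a$ parts of size $b$ whose common stabiliser in $S_n$ is trivial. *)

theory Defs
  imports "HOL-Combinatorics.Permutations"
begin

definition sym_group :: "nat \<Rightarrow> (nat \<Rightarrow> nat) set" where
  "sym_group n = {p. p permutes {..<n}}"

definition std_partition :: "nat \<Rightarrow> nat \<Rightarrow> nat set set" where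
  "std_partition a b = (\<lambda>i. {i*b..<(i+1)*b}) ` {..<a}"

text \<open>The wreath product S_b wr S_a inside S_(ab): the stabiliser of the standard partition.\<close>
definition wreath_subgroup :: "nat \<Rightarrow> nat \<Rightarrow> (nat \<Rightarrow> nat) set" where
  "wreath_subgroup a b =
     {p \<in> sym_group (a*b). \<forall>B \<in> std_partition a b. p ` B \<in> std_partition a b}"

definition conj_set :: "('a \<Rightarrow> 'a) \<Rightarrow> ('a \<Rightarrow> 'a) set \<Rightarrow> ('a \<Rightarrow> 'a) set" where
  "conj_set g H = (\<lambda>h. inv g \<circ> h \<circ> g) ` H"

definition core :: "('a \<Rightarrow> 'a) set \<Rightarrow> ('a \<Rightarrow> 'a) set \<Rightarrow> ('a \<Rightarrow> 'a) set" where
  "core G H = (\<Inter>g\<in>G. conj_set g H)"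

definition base_size :: "('a \<Rightarrow> 'a) set \<Rightarrow> ('a \<Rightarrow> 'a) set \<Rightarrow> nat" where
  "base_size G H = (LEAST k. \<exists>S. S \<subseteq> G \<and> finite S \<and> card S = k \<and>
                              (\<Inter>g\<in>S. conj_set g H) = core G H)"

end

theory Submission
  imports Defs
begin


definition cl :: "nat \<Rightarrow> nat \<Rightarrow> nat" where
  "cl b x = (if x mod b < x div b then x mod b else x mod b + 1)"
definition enc :: "nat \<Rightarrow> nat \<Rightarrow> nat \<Rightarrow> nat" where
  "enc b i j = i*b + (if j < i then j else j - 1)"
definition qs :: "nat \<Rightarrow> nat \<Rightarrow> nat" where
  "qs b x = (if x = 0 then b else (x - 1) div b)"

lemma div_lt: "(x::nat) < (b+1)*b \<Longrightarrow> x div b \<le> b"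
  using less_mult_imp_div_less[of x "b+1" b] by simp

lemma A1: assumes "x < (b+1)*b" shows "x div b \<le> b" "cl b x \<le> b" "x div b \<noteq> cl b x"
proof -
  have b0: "b > 0" using assms by (cases b) auto
  show "x div b \<le> b" using div_lt assms .
  have "x mod b < b" using b0 by simp
  then show "cl b x \<le> b" unfolding cl_def by auto
  show "x div b \<noteq> cl b x" unfolding cl_def by auto
qed

lemma E: assumes "i \<le> b" "j \<le> b" "i \<noteq> j"
  shows "enc b i j < (b+1)*b" "enc b i j div b = i" "cl b (enc b i j) = j"
proof -
  define k where "k = (if j < i then j else j - 1)"
  have kb: "k < b" using assms unfolding k_def by auto
  have e: "enc b i j = i*b + k" unfolding enc_def k_def by simp
  have "i*b + k < i*b + b" using kb by simp
  also have "\<dots> \<le> (b+1)*b" using assms(1) by (simp add: mult_le_mono1 add.commute)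
  finally show "enc b i j < (b+1)*b" using e by simp
  have d: "enc b i j div b = i" using e kb by simp
  then show "enc b i j div b = i" .
  have m: "enc b i j mod b = k" using e kb by simp
  show "cl b (enc b i j) = j" unfolding cl_def m d using assms unfolding k_def by auto
qed

lemma E2: assumes "x < (b+1)*b" shows "enc b (x div b) (cl b x) = x"
proof -
  have "x = x div b * b + x mod b" by simp
  then show ?thesis unfolding enc_def cl_def by auto
qed

lemma A4: assumes "x < (b+1)*b" "y < (b+1)*b" "x div b = y div b" "cl b x = cl b y"
  shows "x = y"
  using E2[OF assms(1)] E2[OF assms(2)] assms(3,4) by metis

lemma A2: fixes i b :: nat assumes "i \<le> b" "b > 0" shows "i*b < (b+1)*b" "(i*b) div b = i"
proof -
  have "i < b+1" using assms(1) by simp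
  then show "i*b < (b+1)*b" using mult_strict_right_mono[of i "b+1" b] assms(2) by simp
  show "(i*b) div b = i" using assms by simp
qed

lemma qs_nz: assumes "x < (b+1)*b" "x mod b \<noteq> 0" shows "qs b x = x div b"
proof -
  have "x \<noteq> 0" using assms(2) by (metis mod_0)
  have "x = x div b * b + x mod b" by simp
  then have "x - 1 = x div b * b + (x mod b - 1)" using assms(2) by linarith
  moreover have b0: "b > 0" using assms(1) by (cases b) auto
  moreover have "x mod b < b" using b0 by simp
  then have "x mod b - 1 < b" by linarith
  then have "(x div b * b + (x mod b - 1)) div b = x div b" using b0 by (simp only: div_mult_self3[of b "x div b"]) simp
  ultimately have "(x - 1) div b = x div b" by simp
  then show ?thesis unfolding qs_def using \<open>x \<noteq> 0\<close> by simp
qed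

lemma L3: assumes "x < (b+1)*b" "y < (b+1)*b" "x \<noteq> y" "x div b = y div b" "qs b x = qs b y"
  shows "qs b x = x div b"
proof (cases "x mod b = 0")
  case True
  show ?thesis
  proof (cases "y mod b = 0")
    case True
    have "x = x div b * b + x mod b" "y = y div b * b + y mod b" by simp_all
    then have "x = y" using \<open>x mod b = 0\<close> True assms(4) by simp
    then show ?thesis using assms(3) by simp
  next
    case False
    then show ?thesis using qs_nz[OF assms(2) False] assms(4,5) by simp
  qed
next
  case False
  then show ?thesis using qs_nz[OF assms(1)] by simp
qed

lemma L2: assumes "x < (b+1)*b" "cl b x = 0" shows "x = (qs b x + 1) * b"
proof -
  have m: "x mod b = 0" and d: "x div b > 0" using assms(2) unfolding cl_def by (auto split: if_splits)
  have x: "x = x div b * b" using m by (metis add.right_neutral div_mult_mod_eq)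
  then have "x \<noteq> 0" using d by (metis assms(1) div_0 less_numeral_extra(3))
  obtain r where r: "x div b = Suc r" using d by (cases "x div b") auto
  have b0: "b > 0" using assms(1) by (cases b) auto
  have "x - 1 = r * b + (b - 1)" using x r b0 by (simp add: algebra_simps)
  moreover have "(r * b + (b - 1)) div b = r" using b0 by (simp only: div_mult_self3[of b r "b-1"]) simp
  ultimately have "(x - 1) div b = r" by simp
  then show ?thesis unfolding qs_def using \<open>x \<noteq> 0\<close> x r by simp
qed

lemma L1: assumes "x < (b+1)*b" "b \<ge> 3" "qs b x = cl b x" shows "x = b"
proof (cases "x mod b = 0")
  case True
  show ?thesis
  proof (cases "x = 0")
    case True
    then have "qs b x = b" "cl b x = 1" unfolding qs_def cl_def by auto
    then show ?thesis using assms by simp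
  next
    case False
    have x: "x = x div b * b" using True by (metis add.right_neutral div_mult_mod_eq)
    then have d: "x div b > 0" using False by (metis mult_0 neq0_conv)
    then have "cl b x = 0" using True unfolding cl_def by simp
    then have "x = (qs b x + 1) * b" using L2 assms(1) by blast
    then show ?thesis using assms(3) \<open>cl b x = 0\<close> by simp
  qed
next
  case False
  then have "qs b x = x div b" using qs_nz assms(1) by blast
  then show ?thesis using A1(3)[OF assms(1)] assms(3) by simp
qed



lemma mem_blk: assumes "b > 0" shows "(x::nat) \<in> {i*b..<(i+1)*b} \<longleftrightarrow> x div b = i"
proof
  assume "x \<in> {i*b..<(i+1)*b}"
  then show "x div b = i" by (intro div_nat_eqI) (auto simp: mult.commute)
next
  assume "x div b = i"
  moreover have "x = x div b * b + x mod b" by simp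
  moreover have "x mod b < b" using assms by simp
  ultimately show "x \<in> {i*b..<(i+1)*b}" by (metis atLeastLessThan_iff le_add1 add_less_cancel_left add.commute mult_Suc Suc_eq_plus1)
qed

lemma dm: fixes b i r :: nat assumes "r < b" shows "(i*b + r) div b = i" "(i*b + r) mod b = r"
  using assms by auto

lemma GL:
  assumes g: "g permutes {..<a*b}" and t: "t \<in> conj_set g (wreath_subgroup a b)" and b0: "b > 0"
  shows "t permutes {..<a*b}"
    and "\<And>x y. x < a*b \<Longrightarrow> y < a*b \<Longrightarrow> (g x div b = g y div b \<longleftrightarrow> g (t x) div b = g (t y) div b)"
proof -
  from t obtain h where h: "h \<in> wreath_subgroup a b" and teq: "t = inv g \<circ> h \<circ> g"
    unfolding conj_set_def by auto
  have hp: "h permutes {..<a*b}" using h unfolding wreath_subgroup_def sym_group_def by auto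
  have hB: "\<And>B. B \<in> std_partition a b \<Longrightarrow> h ` B \<in> std_partition a b"
    using h unfolding wreath_subgroup_def by auto
  show "t permutes {..<a*b}" unfolding teq
    by (rule permutes_compose[OF g permutes_compose[OF hp permutes_inv[OF g]]])
  have ht: "\<And>x. g (t x) = h (g x)" using teq permutes_inverses(1)[OF g] by simp
  define blk where "blk i = {i*b..<(i+1)*b}" for i
  have mb: "\<And>x i. x \<in> blk i \<longleftrightarrow> x div b = i" unfolding blk_def using mem_blk[OF b0] by blast
  have hblk: "h ` blk (u div b) = blk (h u div b)" if u: "u < a*b" for u
  proof -
    have "u div b < a" using u by (simp add: less_mult_imp_div_less)
    then have "blk (u div b) \<in> std_partition a b" unfolding std_partition_def blk_def by auto
    then obtain j where "h ` blk (u div b) = blk j" using hB unfolding std_partition_def blk_def by blast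
    moreover have "h u \<in> h ` blk (u div b)" using mb by blast
    ultimately show ?thesis using mb by auto
  qed
  have same: "(u div b = v div b \<longleftrightarrow> h u div b = h v div b)" if "u < a*b" "v < a*b" for u v
  proof
    assume "u div b = v div b"
    then have "h u \<in> h ` blk (v div b)" using mb by blast
    then show "h u div b = h v div b" using hblk[OF that(2)] mb by auto
  next
    assume "h u div b = h v div b"
    then have "h ` blk (u div b) = h ` blk (v div b)" using hblk that by simp
    then have "blk (u div b) = blk (v div b)" using permutes_inj[OF hp] by (simp add: inj_image_eq_iff)
    then show "u div b = v div b" using mb by blast
  qed
  fix x y assume "x < a*b" "y < a*b"
  then have "g x < a*b" "g y < a*b" using permutes_in_image[OF g] by auto
  then show "(g x div b = g y div b \<longleftrightarrow> g (t x) div b = g (t y) div b)" using same ht by simp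
qed

lemma rigid:
  fixes b :: nat
  assumes b3: "b \<ge> 3" and tp: "t permutes {..<(b+1)*b}"
    and PR: "\<And>x y. x < (b+1)*b \<Longrightarrow> y < (b+1)*b \<Longrightarrow> (x div b = y div b \<longleftrightarrow> t x div b = t y div b)"
    and PC: "\<And>x y. x < (b+1)*b \<Longrightarrow> y < (b+1)*b \<Longrightarrow> (cl b x = cl b y \<longleftrightarrow> cl b (t x) = cl b (t y))"
    and PQ: "\<And>x y. x < (b+1)*b \<Longrightarrow> y < (b+1)*b \<Longrightarrow> (qs b x = qs b y \<longleftrightarrow> qs b (t x) = qs b (t y))"
  shows "t = id"
proof -
  define N where "N = (b+1)*b"
  have b0: "b > 0" using b3 by simp
  have tN: "\<And>x. x < N \<Longrightarrow> t x < N" using permutes_in_image[OF tp] unfolding N_def by auto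
  have tinj: "inj t" using permutes_inj[OF tp] .
  define \<pi> where "\<pi> i = t (i*b) div b" for i
  have R1: "t x div b = \<pi> (x div b)" if "x < N" for x
  proof -
    have "x div b \<le> b" using A1(1) that unfolding N_def .
    then have "(x div b)*b < N" "((x div b)*b) div b = x div b" using A2[OF _ b0] unfolding N_def by auto
    then show ?thesis using PR[of x "(x div b)*b"] that unfolding \<pi>_def N_def by auto
  qed
  have prange: "\<pi> ` {..b} \<subseteq> {..b}"
  proof
    fix y assume "y \<in> \<pi> ` {..b}"
    then obtain i where "i \<le> b" "y = \<pi> i" by auto
    then have "i*b < N" using A2[OF _ b0] unfolding N_def by auto
    then show "y \<in> {..b}" using A1(1) tN \<open>y = \<pi> i\<close> unfolding \<pi>_def N_def by auto
  qed
  have pinj: "inj_on \<pi> {..b}"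
  proof (rule inj_onI)
    fix i j assume "i \<in> {..b}" "j \<in> {..b}" "\<pi> i = \<pi> j"
    then have "i*b < N" "j*b < N" "(i*b) div b = i" "(j*b) div b = j" using A2[OF _ b0] unfolding N_def by auto
    then show "i = j" using PR[of "i*b" "j*b"] \<open>\<pi> i = \<pi> j\<close> unfolding \<pi>_def N_def by auto
  qed
  have psurj: "\<pi> ` {..b} = {..b}" using endo_inj_surj[OF _ prange pinj] by simp
  have R2: "cl b (t x) = \<pi> (cl b x)" if x: "x < N" for x
  proof (rule ccontr)
    assume ne: "cl b (t x) \<noteq> \<pi> (cl b x)"
    have "cl b (t x) \<le> b" using A1(2) tN x unfolding N_def by auto
    then obtain i where i: "i \<le> b" "\<pi> i = cl b (t x)" using psurj by (metis atMost_iff imageE)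
    have ic: "i \<noteq> cl b x" using ne i by auto
    have cb: "cl b x \<le> b" using A1(2) x unfolding N_def by auto
    define y where "y = enc b i (cl b x)"
    have y: "y < N" "y div b = i" "cl b y = cl b x" using E[OF i(1) cb ic] unfolding y_def N_def by auto
    have "cl b (t y) = cl b (t x)" using PC[of y x] y x unfolding N_def by auto
    moreover have "t y div b = \<pi> i" using R1 y by auto
    moreover have "t y div b \<noteq> cl b (t y)" using A1(3) tN y(1) unfolding N_def by auto
    ultimately show False using i by auto
  qed
  have S: "qs b (t ((i+1)*b)) = \<pi> i \<and> cl b (t ((i+1)*b)) = \<pi> 0" if i: "i < b" for i
  proof -
    define p1 where "p1 = i*b + 1"
    define p2 where "p2 = i*b + 2"
    define p3 where "p3 = (i+1)*b"
    have "(i+1)*b \<le> b*b" using i mult_le_mono1[of "i+1" b b] by simp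
    moreover have "b*b < N" unfolding N_def using b0 by simp
    ultimately have p3N: "p3 < N" unfolding p3_def by simp
    have p12: "p1 < p3" "p2 < p3" unfolding p1_def p2_def p3_def using b3 by auto
    have d1: "p1 div b = i" "p1 mod b = 1" unfolding p1_def using b3 dm[of 1 b i] by auto
    have d2: "p2 div b = i" "p2 mod b = 2" unfolding p2_def using b3 dm[of 2 b i] by auto
    have p1N: "p1 < N" and p2N: "p2 < N" using p12 p3N by auto
    have q1: "qs b p1 = i" using qs_nz[of p1 b] p1N d1 unfolding N_def by auto
    have q2: "qs b p2 = i" using qs_nz[of p2 b] p2N d2 unfolding N_def by auto
    have d3: "p3 div b = i+1" "p3 mod b = 0" unfolding p3_def using b0 by auto
    have c3: "cl b p3 = 0" unfolding cl_def using d3 by simp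
    have "p3 = (qs b p3 + 1) * b" using L2[of p3 b] p3N c3 unfolding N_def by auto
    then have q3: "qs b p3 = i" unfolding p3_def using b0 by simp
    have "t p1 \<noteq> t p2" using tinj unfolding p1_def p2_def by (auto dest: injD)
    moreover have "t p1 div b = t p2 div b" using PR[of p1 p2] p1N p2N d1 d2 unfolding N_def by auto
    moreover have "qs b (t p1) = qs b (t p2)" using PQ[of p1 p2] p1N p2N q1 q2 unfolding N_def by auto
    ultimately have "qs b (t p1) = t p1 div b" using L3[of "t p1" b "t p2"] tN p1N p2N unfolding N_def by auto
    then have "qs b (t p1) = \<pi> i" using R1[OF p1N] d1 by simp
    moreover have "qs b (t p3) = qs b (t p1)" using PQ[of p3 p1] p3N p1N q1 q3 unfolding N_def by auto
    moreover have "cl b (t p3) = \<pi> 0" using R2[OF p3N] c3 by simp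
    ultimately show ?thesis unfolding p3_def by simp
  qed
  have R3: "\<pi> 0 = 0"
  proof -
    have bN: "b < N" unfolding N_def using b0 by simp
    from S[of 0] b0 have "qs b (t b) = cl b (t b)" by simp
    then have "t b = b" using L1[of "t b" b] tN bN b3 unfolding N_def by auto
    moreover have "cl b b = 0" unfolding cl_def using b0 by simp
    ultimately show ?thesis using S[of 0] b0 by simp
  qed
  have R4: "\<pi> i = i" if "i \<le> b" for i
    using that
  proof (induction i)
    case 0
    show ?case using R3 by simp
  next
    case (Suc i)
    then have i: "i < b" and IH: "\<pi> i = i" by auto
    have "(i+1)*b \<le> b*b" using i mult_le_mono1[of "i+1" b b] by simp
    moreover have "b*b < N" unfolding N_def using b0 by simp
    ultimately have pN: "t ((i+1)*b) < N" using tN by simp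
    have "cl b (t ((i+1)*b)) = 0" using S[OF i] R3 by simp
    then have "t ((i+1)*b) = (qs b (t ((i+1)*b)) + 1) * b" using L2 pN unfolding N_def by blast
    then have "t ((i+1)*b) = (i+1)*b" using S[OF i] IH by simp
    then show ?case unfolding \<pi>_def using b0 by simp
  qed
  show "t = id"
  proof
    fix x
    show "t x = id x"
    proof (cases "x < N")
      case True
      have "t x div b = x div b" using R1[OF True] R4 A1(1)[of x b] True unfolding N_def by auto
      moreover have "cl b (t x) = cl b x" using R2[OF True] R4 A1(2)[of x b] True unfolding N_def by auto
      ultimately show ?thesis using A4[of "t x" b x] tN True unfolding N_def by auto
    next
      case False
      then show ?thesis using permutes_not_in[OF tp] unfolding N_def by auto
    qed
  qed
qed



definition g2 :: "nat \<Rightarrow> nat \<Rightarrow> nat" where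
  "g2 b x = (if x < (b+1)*b then enc b (cl b x) (x div b) else x)"
definition sh :: "nat \<Rightarrow> nat \<Rightarrow> nat" where
  "sh N x = (if x < N then (if x = 0 then N - 1 else x - 1) else x)"
definition sh' :: "nat \<Rightarrow> nat \<Rightarrow> nat" where
  "sh' N x = (if x < N then (if x = N - 1 then 0 else x + 1) else x)"
definition g3 :: "nat \<Rightarrow> nat \<Rightarrow> nat" where
  "g3 b = sh ((b+1)*b)"

lemma sh_perm: assumes "N > 0" shows "sh N permutes {..<N}"
proof -
  have "bij_betw (sh N) {..<N} {..<N}"
    by (rule bij_betw_byWitness[where f'="sh' N"]) (use assms in \<open>auto simp: sh_def sh'_def\<close>)
  then show ?thesis by (rule bij_imp_permutes) (simp add: sh_def)
qed

lemma g2_props: assumes "b > 0"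
  shows "g2 b permutes {..<(b+1)*b}" "\<And>x. x < (b+1)*b \<Longrightarrow> g2 b x div b = cl b x"
proof -
  have in1: "g2 b x < (b+1)*b \<and> g2 b x div b = cl b x \<and> cl b (g2 b x) = x div b" if "x < (b+1)*b" for x
    using E[of "cl b x" b "x div b"] A1[OF that] unfolding g2_def using that by auto
  have inv: "g2 b (g2 b x) = x" for x
  proof (cases "x < (b+1)*b")
    case True
    then have "g2 b (g2 b x) = enc b (x div b) (cl b x)" using in1[OF True] unfolding g2_def[of b "g2 b x"] by simp
    then show ?thesis using E2[OF True] by simp
  next
    case False then show ?thesis unfolding g2_def by simp
  qed
  have "bij_betw (g2 b) {..<(b+1)*b} {..<(b+1)*b}"
    by (rule bij_betw_byWitness[where f'="g2 b"]) (use inv in1 in auto)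
  then show "g2 b permutes {..<(b+1)*b}" by (rule bij_imp_permutes) (simp add: g2_def)
  show "\<And>x. x < (b+1)*b \<Longrightarrow> g2 b x div b = cl b x" using in1 by blast
qed

lemma g3_props: assumes "b > 0"
  shows "g3 b permutes {..<(b+1)*b}" "\<And>x. x < (b+1)*b \<Longrightarrow> g3 b x div b = qs b x"
proof -
  define N where "N = (b+1)*b"
  have N0: "N > 0" unfolding N_def using assms by simp
  show "g3 b permutes {..<(b+1)*b}" unfolding g3_def using sh_perm N0 unfolding N_def by blast
  have e: "N - 1 = b*b + (b - 1)" unfolding N_def using assms by (cases b) auto
  have "(b*b + (b - 1)) div b = b" using dm[of "b-1" b b] assms by simp
  then have "(N - 1) div b = b" using e by simp
  then show "\<And>x. x < (b+1)*b \<Longrightarrow> g3 b x div b = qs b x" unfolding g3_def sh_def qs_def N_def by auto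
qed

definition equipart :: "'a set \<Rightarrow> 'a set set \<Rightarrow> nat \<Rightarrow> nat \<Rightarrow> bool" where
  "equipart U P b k \<longleftrightarrow> finite U \<and> (\<forall>B\<in>P. B \<subseteq> U \<and> card B = b) \<and>
     (\<forall>B\<in>P. \<forall>C\<in>P. B \<noteq> C \<longrightarrow> B \<inter> C = {}) \<and> (\<forall>x\<in>U. \<exists>B\<in>P. x \<in> B) \<and> card P = k"

lemma ep_unique: "equipart U P b k \<Longrightarrow> B \<in> P \<Longrightarrow> C \<in> P \<Longrightarrow> x \<in> B \<Longrightarrow> x \<in> C \<Longrightarrow> B = C"
  unfolding equipart_def by blast

definition blockof :: "'a set set \<Rightarrow> 'a \<Rightarrow> 'a set" where
  "blockof P x = (THE B. B \<in> P \<and> x \<in> B)"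

lemma blockof_eq: assumes "equipart U P b k" "B \<in> P" "x \<in> B" shows "blockof P x = B"
  unfolding blockof_def using assms ep_unique[OF assms(1)] by (intro the_equality) auto

lemma blockof: assumes "equipart U P b k" "x \<in> U" shows "blockof P x \<in> P" "x \<in> blockof P x"
proof -
  obtain B where "B \<in> P" "x \<in> B" using assms unfolding equipart_def by blast
  then show "blockof P x \<in> P" "x \<in> blockof P x" using blockof_eq[OF assms(1)] by auto
qed

lemma miss_unique:
  assumes P: "equipart U P b (Suc b)" and Q: "equipart U Q b (Suc b)"
    and cB: "\<forall>B\<in>P. \<forall>C\<in>Q. \<forall>x y. x \<in> B \<longrightarrow> x \<in> C \<longrightarrow> y \<in> B \<longrightarrow> y \<in> C \<longrightarrow> x = y"
    and B: "B \<in> P"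
  shows "\<exists>!C. C \<in> Q \<and> B \<inter> C = {}"
proof -
  have BU: "B \<subseteq> U" and cardB: "card B = b" using P B unfolding equipart_def by auto
  have finQ: "finite Q" using Q unfolding equipart_def by (metis card.infinite nat.distinct(1))
  define f where "f = blockof Q"
  have fQ: "f ` B \<subseteq> Q" using blockof(1)[OF Q] BU unfolding f_def by auto
  have finj: "inj_on f B"
  proof (rule inj_onI)
    fix x y assume "x \<in> B" "y \<in> B" "f x = f y"
    then have "x \<in> f x" "y \<in> f x" "f x \<in> Q" using blockof[OF Q] BU unfolding f_def by auto
    then show "x = y" using cB B \<open>x \<in> B\<close> \<open>y \<in> B\<close> by blast
  qed
  have "card (f ` B) = b" using card_image[OF finj] cardB by simp
  then have "card (Q - f ` B) = 1" using card_Diff_subset[OF finite_subset[OF fQ finQ] fQ] Q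
    unfolding equipart_def by simp
  then obtain C0 where C0: "Q - f ` B = {C0}" by (rule card_1_singletonE)
  have iff: "C \<in> Q \<and> B \<inter> C = {} \<longleftrightarrow> C \<in> Q - f ` B" for C
  proof
    assume "C \<in> Q \<and> B \<inter> C = {}"
    moreover have "C \<notin> f ` B"
    proof
      assume "C \<in> f ` B"
      then obtain x where "x \<in> B" "C = f x" by auto
      then have "x \<in> C" using blockof(2)[OF Q] BU unfolding f_def by auto
      then show False using \<open>x \<in> B\<close> calculation by auto
    qed
    ultimately show "C \<in> Q - f ` B" by auto
  next
    assume C: "C \<in> Q - f ` B"
    have "B \<inter> C = {}"
    proof (rule ccontr)
      assume "B \<inter> C \<noteq> {}"
      then obtain x where "x \<in> B" "x \<in> C" by auto
      then have "f x = C" using blockof_eq[OF Q] C unfolding f_def by auto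
      then show False using C \<open>x \<in> B\<close> by auto
    qed
    then show "C \<in> Q \<and> B \<inter> C = {}" using C by auto
  qed
  show ?thesis using iff C0 by auto
qed

lemma lower_abstract:
  assumes P: "equipart U P b (Suc b)" and Q: "equipart U Q b (Suc b)" and b1: "b \<ge> 1"
  shows "\<exists>t. t permutes U \<and> t \<noteq> id \<and> (\<forall>B\<in>P. t ` B \<in> P) \<and> (\<forall>B\<in>Q. t ` B \<in> Q)"
proof (cases "\<exists>B\<in>P. \<exists>C\<in>Q. \<exists>x y. x \<in> B \<and> x \<in> C \<and> y \<in> B \<and> y \<in> C \<and> x \<noteq> y")
  case True
  then obtain B C x y where BC: "B \<in> P" "C \<in> Q" "x \<in> B" "x \<in> C" "y \<in> B" "y \<in> C" "x \<noteq> y" by blast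
  have xyU: "x \<in> U" "y \<in> U" using P BC unfolding equipart_def by auto
  define t where "t = transpose x y"
  have "t permutes U" unfolding t_def using permutes_swap_id xyU by metis
  moreover have "t \<noteq> id" using BC(7) unfolding t_def by (metis id_apply transpose_apply_first)
  moreover have "t ` D \<in> P" if "D \<in> P" for D
  proof -
    have "x \<in> D \<longleftrightarrow> y \<in> D" using ep_unique[OF P] that BC by blast
    then show ?thesis unfolding t_def using that by simp
  qed
  moreover have "t ` D \<in> Q" if "D \<in> Q" for D
  proof -
    have "x \<in> D \<longleftrightarrow> y \<in> D" using ep_unique[OF Q] that BC by blast
    then show ?thesis unfolding t_def using that by simp
  qed
  ultimately show ?thesis by blast
next
  case False
  then have cB: "\<forall>B\<in>P. \<forall>C\<in>Q. \<forall>x y. x \<in> B \<longrightarrow> x \<in> C \<longrightarrow> y \<in> B \<longrightarrow> y \<in> C \<longrightarrow> x = y" by blast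
  then have cB': "\<forall>B\<in>Q. \<forall>C\<in>P. \<forall>x y. x \<in> B \<longrightarrow> x \<in> C \<longrightarrow> y \<in> B \<longrightarrow> y \<in> C \<longrightarrow> x = y" by blast
  have U: "finite U" using P unfolding equipart_def by auto
  have PU: "\<And>B. B \<in> P \<Longrightarrow> B \<subseteq> U" and QU: "\<And>B. B \<in> Q \<Longrightarrow> B \<subseteq> U"
    using P Q unfolding equipart_def by auto
  have cardP: "card P = Suc b" using P unfolding equipart_def by auto
  then have "P \<noteq> {}" by auto
  then obtain P1 where P1: "P1 \<in> P" by auto
  have cb: "card (P - {P1}) = b" using cardP P1 by simp
  have "P - {P1} \<noteq> {}"
  proof
    assume "P - {P1} = {}"
    then have "card (P - {P1}) = 0" by (metis card.empty)
    then show False using cb b1 by simp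
  qed
  then obtain P2 where P2: "P2 \<in> P" "P2 \<noteq> P1" by auto
  define miss where "miss B = (THE C. C \<in> Q \<and> B \<inter> C = {})" for B
  have missP: "miss B \<in> Q" "B \<inter> miss B = {}" if "B \<in> P" for B
    using theI'[OF miss_unique[OF P Q cB that]] unfolding miss_def by auto
  have miss_iff: "B \<inter> C = {} \<longleftrightarrow> C = miss B" if "B \<in> P" "C \<in> Q" for B C
    using missP[OF that(1)] miss_unique[OF P Q cB that(1)] that(2) by blast
  have miss_inj: "B1 = B2" if "B1 \<in> P" "B2 \<in> P" "miss B1 = miss B2" for B1 B2
  proof -
    have "miss B1 \<inter> B1 = {}" "miss B1 \<inter> B2 = {}" using missP that by auto
    then show ?thesis using miss_unique[OF Q P cB' missP(1)[OF that(1)]] that by blast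
  qed
  define m1 where "m1 = miss P1"
  define m2 where "m2 = miss P2"
  have m12: "m1 \<noteq> m2" using miss_inj P1 P2 unfolding m1_def m2_def by blast
  define sP where "sP = transpose P1 P2"
  define sQ where "sQ = transpose m1 m2"
  have sPP: "sP B \<in> P" if "B \<in> P" for B using that P1 P2 unfolding sP_def transpose_def by auto
  have sQQ: "sQ C \<in> Q" if "C \<in> Q" for C
    using that missP P1 P2 unfolding sQ_def transpose_def m1_def m2_def by auto
  have sPsP: "sP (sP B) = B" for B unfolding sP_def by simp
  have sQsQ: "sQ (sQ B) = B" for B unfolding sQ_def by simp
  have comm: "sQ (miss B) = miss (sP B)" if "B \<in> P" for B
  proof (cases "B = P1 \<or> B = P2")
    case True
    then show ?thesis unfolding sQ_def sP_def m1_def m2_def by auto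
  next
    case False
    then have "miss B \<noteq> m1" "miss B \<noteq> m2" using miss_inj that P1 P2 unfolding m1_def m2_def by blast+
    then show ?thesis using False unfolding sQ_def sP_def by simp
  qed
  define rowOf where "rowOf = blockof P"
  define colOf where "colOf = blockof Q"
  have ne: "\<exists>y. y \<in> sP (rowOf x) \<inter> sQ (colOf x)" if x: "x \<in> U" for x
  proof (rule ccontr)
    assume "\<not> ?thesis"
    then have e: "sP (rowOf x) \<inter> sQ (colOf x) = {}" by auto
    have R: "rowOf x \<in> P" "x \<in> rowOf x" using blockof[OF P x] unfolding rowOf_def by auto
    have C: "colOf x \<in> Q" "x \<in> colOf x" using blockof[OF Q x] unfolding colOf_def by auto
    have "sQ (colOf x) = miss (sP (rowOf x))" using miss_iff[OF sPP[OF R(1)] sQQ[OF C(1)]] e by simp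
    also have "\<dots> = sQ (miss (rowOf x))" using comm[OF R(1)] by simp
    finally have "colOf x = miss (rowOf x)" by (metis sQsQ)
    then have "rowOf x \<inter> colOf x = {}" using missP[OF R(1)] by simp
    then show False using R C by auto
  qed
  define t where "t x = (if x \<in> U then (SOME y. y \<in> sP (rowOf x) \<inter> sQ (colOf x)) else x)" for x
  have tin: "t x \<in> sP (rowOf x) \<inter> sQ (colOf x)" if "x \<in> U" for x
    unfolding t_def using that someI_ex[OF ne[OF that]] by simp
  have tU: "t x \<in> U" if "x \<in> U" for x
    using tin[OF that] sPP[OF blockof(1)[OF P that]] PU unfolding rowOf_def by blast
  have trow: "rowOf (t x) = sP (rowOf x)" if "x \<in> U" for x
    using blockof_eq[OF P sPP[OF blockof(1)[OF P that]]] tin[OF that] unfolding rowOf_def by auto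
  have tcol: "colOf (t x) = sQ (colOf x)" if "x \<in> U" for x
    using blockof_eq[OF Q sQQ[OF blockof(1)[OF Q that]]] tin[OF that] unfolding colOf_def by auto
  have tt: "t (t x) = x" for x
  proof (cases "x \<in> U")
    case True
    have "t (t x) \<in> rowOf x \<inter> colOf x" using tin[OF tU[OF True]] trow[OF True] tcol[OF True] sPsP sQsQ by simp
    moreover have "x \<in> rowOf x" "x \<in> colOf x" "rowOf x \<in> P" "colOf x \<in> Q"
      using blockof[OF P True] blockof[OF Q True] unfolding rowOf_def colOf_def by auto
    ultimately show ?thesis using cB by blast
  next
    case False
    then show ?thesis unfolding t_def by simp
  qed
  have "bij_betw t U U"
    by (rule bij_betw_byWitness[where f'=t]) (use tt tU in auto)
  then have tp: "t permutes U" by (rule bij_imp_permutes) (simp add: t_def)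
  have imgP: "t ` D = sP D" if D: "D \<in> P" for D
  proof
    show "t ` D \<subseteq> sP D"
    proof
      fix y assume "y \<in> t ` D"
      then obtain x where x: "x \<in> D" "y = t x" by auto
      then have "x \<in> U" using PU D by auto
      then show "y \<in> sP D" using tin blockof_eq[OF P D x(1)] x unfolding rowOf_def by auto
    qed
    show "sP D \<subseteq> t ` D"
    proof
      fix y assume y: "y \<in> sP D"
      then have yU: "y \<in> U" using PU sPP[OF D] by auto
      have "rowOf y = sP D" using blockof_eq[OF P sPP[OF D] y] unfolding rowOf_def .
      then have "t y \<in> D" using tin[OF yU] sPsP by auto
      then show "y \<in> t ` D" using tt[of y] by (metis image_eqI)
    qed
  qed
  have imgQ: "t ` D = sQ D" if D: "D \<in> Q" for D
  proof
    show "t ` D \<subseteq> sQ D"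
    proof
      fix y assume "y \<in> t ` D"
      then obtain x where x: "x \<in> D" "y = t x" by auto
      then have "x \<in> U" using QU D by auto
      then show "y \<in> sQ D" using tin blockof_eq[OF Q D x(1)] x unfolding colOf_def by auto
    qed
    show "sQ D \<subseteq> t ` D"
    proof
      fix y assume y: "y \<in> sQ D"
      then have yU: "y \<in> U" using QU sQQ[OF D] by auto
      have "colOf y = sQ D" using blockof_eq[OF Q sQQ[OF D] y] unfolding colOf_def .
      then have "t y \<in> D" using tin[OF yU] sQsQ by auto
      then show "y \<in> t ` D" using tt[of y] by (metis image_eqI)
    qed
  qed
  have "t \<noteq> id"
  proof
    assume tid: "t = id"
    have "card P1 = b" using P P1 unfolding equipart_def by auto
    then obtain x where x: "x \<in> P1" using b1 by fastforce
    then have "t x \<in> P2" using imgP[OF P1] unfolding sP_def by auto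
    then have "x \<in> P1 \<inter> P2" using tid x by simp
    then show False using P P1 P2 unfolding equipart_def by blast
  qed
  then show ?thesis using tp imgP imgQ sPP sQQ by auto
qed



lemma std_ep: assumes b0: "b > 0" shows "equipart {..<a*b} (std_partition a b) b a"
proof -
  define blk where "blk i = {i*b..<(i+1)*b}" for i
  have mb: "\<And>x i. x \<in> blk i \<longleftrightarrow> x div b = i" unfolding blk_def using mem_blk[OF b0] by blast
  have std: "std_partition a b = blk ` {..<a}" unfolding std_partition_def blk_def by simp
  have sub: "blk i \<subseteq> {..<a*b}" if "i < a" for i
  proof
    fix x assume "x \<in> blk i"
    then have "x < (i+1)*b" unfolding blk_def by auto
    also have "(i+1)*b \<le> a*b" using that by (intro mult_le_mono1) simp
    finally show "x \<in> {..<a*b}" by simp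
  qed
  have cd: "card (blk i) = b" for i unfolding blk_def by (simp add: algebra_simps)
  have inj: "inj_on blk {..<a}"
  proof (rule inj_onI)
    fix i j assume "blk i = blk j"
    moreover have "i*b \<in> blk i" using mb b0 by simp
    ultimately show "i = j" using mb b0 by (metis nonzero_mult_div_cancel_right less_nat_zero_code neq0_conv)
  qed
  have c1: "card (blk ` {..<a}) = a" using card_image[OF inj] by simp
  have c2: "\<forall>B\<in>blk ` {..<a}. B \<subseteq> {..<a*b} \<and> card B = b" using sub cd by auto
  have c3: "\<forall>B\<in>blk ` {..<a}. \<forall>C\<in>blk ` {..<a}. B \<noteq> C \<longrightarrow> B \<inter> C = {}" using mb by auto
  have c4: "\<forall>x\<in>{..<a*b}. \<exists>B\<in>blk ` {..<a}. x \<in> B"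
  proof
    fix x assume "x \<in> {..<a*b}"
    then have "x div b < a" by (simp add: less_mult_imp_div_less)
    then show "\<exists>B\<in>blk ` {..<a}. x \<in> B" using mb by blast
  qed
  show ?thesis unfolding equipart_def std using c1 c2 c3 c4 by simp
qed

lemma img_ep: assumes P: "equipart U P b k" and f: "f permutes U"
  shows "equipart U ((`) f ` P) b k"
proof -
  have inj: "inj f" using permutes_inj[OF f] .
  have fU: "f ` U = U" using permutes_image[OF f] .
  have c0: "finite U" using P unfolding equipart_def by auto
  have "inj_on ((`) f) P" by (rule inj_onI) (use inj in \<open>simp add: inj_image_eq_iff\<close>)
  then have c1: "card ((`) f ` P) = k" using card_image P unfolding equipart_def by metis
  have c2: "\<forall>B\<in>(`) f ` P. B \<subseteq> U \<and> card B = b"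
  proof
    fix B assume "B \<in> (`) f ` P"
    then obtain B0 where B0: "B0 \<in> P" "B = f ` B0" by auto
    then have "B0 \<subseteq> U" "card B0 = b" using P unfolding equipart_def by auto
    moreover have "card (f ` B0) = card B0" using card_image[OF inj_on_subset[OF inj]] by blast
    ultimately show "B \<subseteq> U \<and> card B = b" using B0 fU by auto
  qed
  have c3: "\<forall>B\<in>(`) f ` P. \<forall>C\<in>(`) f ` P. B \<noteq> C \<longrightarrow> B \<inter> C = {}"
  proof (intro ballI impI)
    fix B C assume "B \<in> (`) f ` P" "C \<in> (`) f ` P" "B \<noteq> C"
    then obtain B0 C0 where "B0 \<in> P" "C0 \<in> P" "B = f ` B0" "C = f ` C0" "B0 \<noteq> C0" by auto
    then show "B \<inter> C = {}" using P inj unfolding equipart_def by (simp add: image_Int[symmetric])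
  qed
  have c4: "\<forall>x\<in>U. \<exists>B\<in>(`) f ` P. x \<in> B"
  proof
    fix x assume x: "x \<in> U"
    then have "inv f x \<in> U" using permutes_in_image[OF permutes_inv[OF f]] by simp
    then obtain B where "B \<in> P" "inv f x \<in> B" using P unfolding equipart_def by auto
    moreover have "x = f (inv f x)" using permutes_inverses(1)[OF f] by simp
    ultimately show "\<exists>B\<in>(`) f ` P. x \<in> B" by blast
  qed
  show ?thesis unfolding equipart_def using c0 c1 c2 c3 c4 by blast
qed

lemma conj_from:
  assumes g: "g permutes {..<a*b}" and t: "t permutes {..<a*b}"
    and pres: "\<forall>C \<in> (`) (inv g) ` std_partition a b. t ` C \<in> (`) (inv g) ` std_partition a b"
  shows "t \<in> conj_set g (wreath_subgroup a b)"
proof -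
  define h where "h = g \<circ> t \<circ> inv g"
  have hp: "h permutes {..<a*b}" unfolding h_def
    by (rule permutes_compose[OF permutes_inv[OF g] permutes_compose[OF t g]])
  have "h ` B \<in> std_partition a b" if B: "B \<in> std_partition a b" for B
  proof -
    obtain B' where B': "B' \<in> std_partition a b" "t ` (inv g ` B) = inv g ` B'" using pres B by blast
    have "h ` B = g ` (t ` (inv g ` B))" unfolding h_def by (simp add: image_comp)
    also have "\<dots> = g ` (inv g ` B')" using B' by simp
    also have "\<dots> = B'" using permutes_inverses(1)[OF g] by (simp add: image_comp)
    finally show ?thesis using B' by simp
  qed
  then have "h \<in> wreath_subgroup a b" using hp unfolding wreath_subgroup_def sym_group_def by auto
  moreover have "t = inv g \<circ> h \<circ> g" unfolding h_def using permutes_inverses(2)[OF g] by (simp add: fun_eq_iff)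
  ultimately show ?thesis unfolding conj_set_def by blast
qed

theorem proposition2p5:
  fixes a b n :: nat
  assumes "b \<ge> 3" and "a = b + 1" and "n = a * b"
  shows "base_size (sym_group n) (wreath_subgroup a b) = 3"
proof -
  have b3: "b \<ge> 3" using assms by simp
  have b0: "b > 0" using b3 by simp
  define H where "H = wreath_subgroup a b"
  define G where "G = sym_group n"
  have nab: "n = a*b" "a*b = (b+1)*b" using assms by auto
  have idH: "id \<in> conj_set g H" if "g \<in> G" for g
  proof -
    have g: "g permutes {..<a*b}" using that nab unfolding G_def sym_group_def by simp
    show ?thesis unfolding H_def by (rule conj_from[OF g permutes_id]) simp
  qed
  have up: "t = id" if t1: "t \<in> conj_set id H" and t2: "t \<in> conj_set (g2 b) H" and t3: "t \<in> conj_set (g3 b) H" for t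
  proof -
    have p1: "id permutes {..<a*b}" by simp
    have p2: "g2 b permutes {..<a*b}" using g2_props(1)[OF b0] nab by simp
    have p3: "g3 b permutes {..<a*b}" using g3_props(1)[OF b0] nab by simp
    have tp: "t permutes {..<(b+1)*b}" using GL(1)[OF p1 t1[unfolded H_def] b0] nab by simp
    have tN: "\<And>x. x < (b+1)*b \<Longrightarrow> t x < (b+1)*b" using permutes_in_image[OF tp] by auto
    show ?thesis
    proof (rule rigid[OF b3 tp])
      fix x y assume xy: "x < (b+1)*b" "y < (b+1)*b"
      show "(x div b = y div b \<longleftrightarrow> t x div b = t y div b)"
        using GL(2)[OF p1 t1[unfolded H_def] b0, of x y] xy nab by simp
      show "(cl b x = cl b y \<longleftrightarrow> cl b (t x) = cl b (t y))"
        using GL(2)[OF p2 t2[unfolded H_def] b0, of x y] xy nab tN g2_props(2)[OF b0] by simp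
      show "(qs b x = qs b y \<longleftrightarrow> qs b (t x) = qs b (t y))"
        using GL(2)[OF p3 t3[unfolded H_def] b0, of x y] xy nab tN g3_props(2)[OF b0] by simp
    qed
  qed
  have Gm: "id \<in> G" "g2 b \<in> G" "g3 b \<in> G"
    using g2_props(1)[OF b0] g3_props(1)[OF b0] nab unfolding G_def sym_group_def by auto
  have core: "core G H = {id}"
  proof
    show "core G H \<subseteq> {id}"
    proof
      fix t assume "t \<in> core G H"
      then have "t \<in> conj_set id H" "t \<in> conj_set (g2 b) H" "t \<in> conj_set (g3 b) H"
        using Gm unfolding core_def by auto
      then show "t \<in> {id}" using up by auto
    qed
    show "{id} \<subseteq> core G H" using idH unfolding core_def by auto
  qed
  have lower: "\<exists>t. t \<noteq> id \<and> t \<in> conj_set g1 H \<and> t \<in> conj_set g2' H" if "g1 \<in> G" "g2' \<in> G" for g1 g2'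
  proof -
    have g1: "g1 permutes {..<a*b}" and g2': "g2' permutes {..<a*b}"
      using that nab unfolding G_def sym_group_def by auto
    have std: "equipart {..<a*b} (std_partition a b) b (Suc b)" using std_ep[OF b0, where a=a] assms(2) by simp
    obtain t where t: "t permutes {..<a*b}" "t \<noteq> id"
      "\<forall>B\<in>(`) (inv g1) ` std_partition a b. t ` B \<in> (`) (inv g1) ` std_partition a b"
      "\<forall>B\<in>(`) (inv g2') ` std_partition a b. t ` B \<in> (`) (inv g2') ` std_partition a b"
      using lower_abstract[OF img_ep[OF std permutes_inv[OF g1]] img_ep[OF std permutes_inv[OF g2']]] b0
      by auto
    show ?thesis using conj_from[OF g1 t(1) t(3)] conj_from[OF g2' t(1) t(4)] t(2) unfolding H_def by blast
  qed
  have no_small: "(\<Inter>g\<in>S. conj_set g H) \<noteq> {id}" if S: "S \<subseteq> G" "finite S" "card S < 3" for S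
  proof (cases "card S = 0")
    case True
    then have "S = {}" using S by simp
    then have "(\<Inter>g\<in>S. conj_set g H) = UNIV" by simp
    moreover have "(Suc :: nat \<Rightarrow> nat) \<noteq> id" by (simp add: fun_eq_iff)
    ultimately show ?thesis by (metis UNIV_I singletonD)
  next
    case False
    have "\<exists>g1 g2'. S = {g1, g2'}"
    proof (cases "card S = 1")
      case True
      then obtain g where "S = {g}" by (rule card_1_singletonE)
      then show ?thesis by blast
    next
      case False
      then have "card S = 2" using \<open>card S \<noteq> 0\<close> S(3) by linarith
      then show ?thesis by (auto simp: card_2_iff)
    qed
    then obtain g1 g2' where Sg: "S = {g1, g2'}" by blast
    then have "g1 \<in> G" "g2' \<in> G" using S(1) by auto
    then obtain t where "t \<noteq> id" "t \<in> conj_set g1 H" "t \<in> conj_set g2' H" using lower by blast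
    then have "t \<in> (\<Inter>g\<in>S. conj_set g H)" "t \<notin> {id}" using Sg by auto
    then show ?thesis by blast
  qed
  define S3 where "S3 = {id, g2 b, g3 b}"
  have S3G: "S3 \<subseteq> G" using Gm unfolding S3_def by auto
  have S3f: "finite S3" unfolding S3_def by simp
  have S3i: "(\<Inter>g\<in>S3. conj_set g H) = {id}"
  proof
    show "(\<Inter>g\<in>S3. conj_set g H) \<subseteq> {id}" using up unfolding S3_def by auto
    show "{id} \<subseteq> (\<Inter>g\<in>S3. conj_set g H)" using idH S3G by auto
  qed
  have "card S3 \<le> 3" unfolding S3_def by (auto simp: card_insert_if)
  moreover have "\<not> card S3 < 3" using no_small[OF S3G S3f] S3i by blast
  ultimately have cS3: "card S3 = 3" by simp
  show ?thesis
    unfolding base_size_def G_def[symmetric] H_def[symmetric]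
  proof (rule Least_equality)
    show "\<exists>S\<subseteq>G. finite S \<and> card S = 3 \<and> (\<Inter>g\<in>S. conj_set g H) = core G H"
      using S3G S3f cS3 S3i core by blast
  next
    fix k assume "\<exists>S\<subseteq>G. finite S \<and> card S = k \<and> (\<Inter>g\<in>S. conj_set g H) = core G H"
    then obtain S where S: "S \<subseteq> G" "finite S" "card S = k" "(\<Inter>g\<in>S. conj_set g H) = {id}" using core by auto
    show "3 \<le> k"
    proof (rule ccontr)
      assume "\<not> 3 \<le> k"
      then have "card S < 3" using S(3) by simp
      then show False using no_small[OF S(1) S(2)] S(4) by blast
    qed
  qed
qed


end
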